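(* Let $\mathbb{F}$ be a field, let $K=\mathbb{F}(a_1,b_1,a_2,b_2,\dots)$ be the purely transcendental extension of $\mathbb{F}$ generated by countably many indeterminates $a_n,b_n$ ($n\ge 1$), let $R=K\llbracket x,y\rrbracket$, and let $\sigma$ be the $\mathbb{F}$-algebra automorphism of $R$ described in the context. Let $G=\langle\sigma\rangle$ be the cyclic group of automorphisms of $R$ generated by $\sigma$. If $K$ has characteristic $p>0$, then $G$ is cyclic of order $p$; if $K$ has characteristic zero, then $G$ is infinite cyclic. In either case, the invariant ring $R^G=\{r\in R:\ g(r)=r \text{ for all } g\in G\}$ is not noetherian.
   Context: Setup: $\mathbb{F}$ is a field; $K=\mathbb{F}(a_1,b_1,a_2,b_2,\dots)$ where the $a_n,b_n$ ($n\ge1$) are algebraically independent indeterminates over $\mathbb{F}$; $R=K\llbracket x,y\rrbracket$ is the formal power series ring in $x,y$ over $K$, with maximal ideal $\mathfrak{m}=(x,y)R$. For $n\ge1$ set $f_n=a_nx+b_ny\in R$. Let $\sigma$ be the $\mathbb{F}$-algebra endomorphism of $R$ with $\sigma(x)=x$, $\sigma(y)=y$, $\sigma(a_n)=a_n+yf_{n+1}$, $\sigma(b_n)=b_n-xf_{n+1}$ for all $n\ge1$. (This is well defined: on $\mathbb{F}[a_1,b_1,\dots][x,y]$ it is given by substitution; nonzero elements of $\mathbb{F}[a_1,b_1,\dots]$ map to elements of $R$ with nonzero constant term, hence units, so the map extends to $K$, and it extends to power series by $\mathfrak{m}$-adic continuity since $\sigma(\mathfrak m)\subseteq\mathfrak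 m$. One has $\sigma(f_n)=f_n$ for all $n$, and $\sigma$ is an automorphism of $R$.) *)

theory Defs
  imports "HOL-Library.Poly_Mapping"
          "HOL-Computational_Algebra.Fraction_Field"
          "HOL-Computational_Algebra.Formal_Power_Series"
          "HOL-Algebra.Ring_Divisibility"
begin

text \<open>Polynomial ring F[a_1,b_1,a_2,b_2,...]: variables indexed by nat,
  a_n is variable 2n-2 and b_n is variable 2n-1 (n >= 1), so every variable is used.\<close>
type_synonym 'f Pol = "(nat \<Rightarrow>\<^sub>0 nat) \<Rightarrow>\<^sub>0 'f"

type_synonym 'f Kfield = "'f Pol fract"

text \<open>R = K[[x,y]], realised as (K[[y]])[[x]].\<close>
type_synonym 'f Rring = "'f Kfield fps fps"

definition polvar :: "nat \<Rightarrow> 'f::field Pol" where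
  "polvar i = Poly_Mapping.single (Poly_Mapping.single i 1) 1"

definition polconst :: "'f::field \<Rightarrow> 'f Pol" where
  "polconst c = Poly_Mapping.single 0 c"

definition Kc :: "'f::field Kfield \<Rightarrow> 'f Rring" where
  "Kc k = fps_const (fps_const k)"

definition aK :: "nat \<Rightarrow> 'f::field Kfield" where
  "aK n = Fraction_Field.Fract (polvar (2 * n - 2)) 1"

definition bK :: "nat \<Rightarrow> 'f::field Kfield" where
  "bK n = Fraction_Field.Fract (polvar (2 * n - 1)) 1"

definition Fc :: "'f::field \<Rightarrow> 'f Rring" where
  "Fc c = Kc (Fraction_Field.Fract (polconst c) 1)"

definition xR :: "'f::field Rring" where
  "xR = fps_X"

definition yR :: "'f::field Rring" where
  "yR = fps_const fps_X"

definition fR :: "nat \<Rightarrow> 'f::field Rring" where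
  "fR n = Kc (aK n) * xR + Kc (bK n) * yR"

text \<open>The F-algebra endomorphism sigma of R from the context, characterised by its
  defining properties (these determine it uniquely).\<close>
definition is_sigma :: "('f::field Rring \<Rightarrow> 'f Rring) \<Rightarrow> bool" where
  "is_sigma \<sigma> \<longleftrightarrow>
     (\<forall>r s. \<sigma> (r + s) = \<sigma> r + \<sigma> s) \<and>
     (\<forall>r s. \<sigma> (r * s) = \<sigma> r * \<sigma> s) \<and>
     \<sigma> 1 = 1 \<and>
     (\<forall>c. \<sigma> (Fc c) = Fc c) \<and>
     \<sigma> xR = xR \<and> \<sigma> yR = yR \<and>
     (\<forall>n\<ge>1. \<sigma> (Kc (aK n)) = Kc (aK n) + yR * fR (n + 1)) \<and>
     (\<forall>n\<ge>1. \<sigma> (Kc (bK n)) = Kc (bK n) - xR * fR (n + 1))"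

definition invariant_set :: "('f::field Rring \<Rightarrow> 'f Rring) \<Rightarrow> 'f Rring set" where
  "invariant_set \<sigma> = {r. \<forall>g \<in> range (\<lambda>n::nat. \<sigma> ^^ n) \<union> range (\<lambda>n::nat. inv_into UNIV \<sigma> ^^ n). g r = r}"

definition subring_struct :: "'a::comm_ring_1 set \<Rightarrow> 'a ring" where
  "subring_struct S = \<lparr>carrier = S, monoid.mult = (*), one = 1, zero = 0, add = (+)\<rparr>"

end

theory Submission
  imports Defs
begin



abbreviation cf :: "'a::zero fps fps \<Rightarrow> nat \<Rightarrow> nat \<Rightarrow> 'a" where
  "cf r i j \<equiv> fps_nth (fps_nth r i) j"

lemma Kc_nth: "cf (Kc c) i j = (if i = 0 \<and> j = 0 then c else 0)"
  by (simp add: Kc_def)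

lemma xR_mult_nth: "cf (xR * A) i j = (if i = 0 then 0 else cf A (i - 1) j)"
  by (simp add: xR_def)

lemma yR_mult_nth: "cf (yR * A) i j = (if j = 0 then 0 else cf A i (j - 1))"
  by (simp add: yR_def)

lemma mult_00: "cf (P * Q :: 'a::comm_ring_1 fps fps) 0 0 = cf P 0 0 * cf Q 0 0"
  by simp
lemma mult_10: "cf (P * Q :: 'a::comm_ring_1 fps fps) 1 0 = cf P 0 0 * cf Q 1 0 + cf P 1 0 * cf Q 0 0"
  by (simp add: fps_mult_nth_1)
lemma mult_01: "cf (P * Q :: 'a::comm_ring_1 fps fps) 0 1 = cf P 0 0 * cf Q 0 1 + cf P 0 1 * cf Q 0 0"
  by (simp add: fps_mult_nth_1)
lemma mult_11: "cf (P * Q :: 'a::comm_ring_1 fps fps) 1 1 = cf P 0 0 * cf Q 1 1 + cf P 0 1 * cf Q 1 0 + cf P 1 0 * cf Q 0 1 + cf P 1 1 * cf Q 0 0"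
  by (simp add: fps_mult_nth_1 fps_add_nth)

lemma decomp: "\<exists>u v. (r :: 'f::field Rring) = Kc (cf r 0 0) + xR * u + yR * v"
proof (intro exI)
  show "r = Kc (cf r 0 0) + xR * Abs_fps (\<lambda>i. fps_nth r (i+1)) + yR * fps_const (Abs_fps (\<lambda>j. cf r 0 (j+1)))"
  proof (rule fps_ext, rule fps_ext)
    fix i j
    show "cf r i j = cf (Kc (cf r 0 0) + xR * Abs_fps (\<lambda>i. fps_nth r (i+1)) + yR * fps_const (Abs_fps (\<lambda>j. cf r 0 (j+1)))) i j"
      unfolding fps_add_nth xR_mult_nth yR_mult_nth Kc_nth by (cases i; cases j) simp_all
  qed
qed



lemma update_as_add: "a \<notin> Poly_Mapping.keys f \<Longrightarrow> Poly_Mapping.update a b f = f + Poly_Mapping.single a b"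
  by (rule poly_mapping_eqI) (auto simp: lookup_update lookup_add lookup_single in_keys_iff)

lemma polvar_pow: "(polvar a :: 'f::field Pol) ^ k = Poly_Mapping.single (Poly_Mapping.single a k) 1"
proof (induction k)
  case 0 then show ?case by simp
next
  case (Suc k)
  have "polvar a ^ Suc k = Poly_Mapping.single (Poly_Mapping.single a 1) (1::'f) * Poly_Mapping.single (Poly_Mapping.single a k) 1"
    using Suc by (simp add: polvar_def)
  also have "\<dots> = Poly_Mapping.single (Poly_Mapping.single a (Suc k)) 1"
    by (simp add: mult_single single_add[symmetric])
  finally show ?case .
qed

lemma gen_pol:
  fixes P :: "'f::field Kfield \<Rightarrow> bool"
  assumes add: "\<And>a b. P a \<Longrightarrow> P b \<Longrightarrow> P (a + b)"
    and mult: "\<And>a b. P a \<Longrightarrow> P b \<Longrightarrow> P (a * b)"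
    and const: "\<And>c. P (Fraction_Field.Fract (polconst c) 1)"
    and var: "\<And>i. P (Fraction_Field.Fract (polvar i) 1)"
  shows "P (Fraction_Field.Fract p 1)"
proof -
  have one: "P (Fraction_Field.Fract 1 1)"
    using const[of 1] by (simp add: polconst_def)
  have pw: "P (Fraction_Field.Fract (polvar a ^ k) 1)" for a k
  proof (induction k)
    case 0 then show ?case using one by simp
  next
    case (Suc k)
    have "Fraction_Field.Fract (polvar a ^ Suc k) 1 = Fraction_Field.Fract (polvar a) 1 * Fraction_Field.Fract (polvar a ^ k) 1"
      by simp
    then show ?case using mult[OF var Suc] by simp
  qed
  have mon: "P (Fraction_Field.Fract (Poly_Mapping.single m 1) 1)" for m :: "nat \<Rightarrow>\<^sub>0 nat"
  proof (induction m rule: update_induct)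
    case const
    then show ?case using one by simp
  next
    case (update f a b)
    have "Poly_Mapping.single (Poly_Mapping.update a b f) (1::'f) =
          Poly_Mapping.single f 1 * polvar a ^ b"
      using update(1) by (simp add: update_as_add polvar_pow mult_single)
    then show ?case using mult[OF update(3) pw] by simp
  qed
  have sg: "P (Fraction_Field.Fract (Poly_Mapping.single m c) 1)" for m c
  proof -
    have "Poly_Mapping.single m c = polconst c * Poly_Mapping.single m (1::'f)"
      by (simp add: polconst_def mult_single)
    then show ?thesis using mult[OF const mon] by simp
  qed
  show ?thesis
  proof (induction p rule: update_induct)
    case const
    then show ?case using assms(3)[of 0] by (simp add: polconst_def)
  next
    case (update f a b)
    have "Fraction_Field.Fract (Poly_Mapping.update a b f) 1 = Fraction_Field.Fract f 1 + Fraction_Field.Fract (Poly_Mapping.single a b) 1"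
      using update(1) by (simp add: update_as_add)
    then show ?case using add[OF update(3) sg] by simp
  qed
qed


lemma gen_K [case_names add mult const var inv]:
  fixes P :: "'f::field Kfield \<Rightarrow> bool"
  assumes add: "\<And>a b. P a \<Longrightarrow> P b \<Longrightarrow> P (a + b)"
    and mult: "\<And>a b. P a \<Longrightarrow> P b \<Longrightarrow> P (a * b)"
    and const: "\<And>c. P (Fraction_Field.Fract (polconst c) 1)"
    and var: "\<And>i. P (Fraction_Field.Fract (polvar i) 1)"
    and inv: "\<And>q. P q \<Longrightarrow> q \<noteq> 0 \<Longrightarrow> P (inverse q)"
  shows "P c"
proof (cases c)
  case (Fract p q)
  have pp: "P (Fraction_Field.Fract p 1)" by (rule gen_pol[OF add mult const var])
  have pq: "P (Fraction_Field.Fract q 1)" by (rule gen_pol[OF add mult const var])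
  have "Fraction_Field.Fract q 1 \<noteq> 0" using Fract(2) by (simp add: Zero_fract_def eq_fract)
  then have "P (inverse (Fraction_Field.Fract q 1))" using inv pq by blast
  then have "P (Fraction_Field.Fract p 1 * inverse (Fraction_Field.Fract q 1))" using mult pp by blast
  then show ?thesis using Fract by simp
qed

lemma var_cases: "\<exists>n\<ge>1. Fraction_Field.Fract (polvar i) 1 = aK n \<or> Fraction_Field.Fract (polvar i) 1 = bK n"
proof (cases "even i")
  case True
  then show ?thesis by (intro exI[of _ "i div 2 + 1"]) (auto simp: aK_def)
next
  case False
  then show ?thesis by (intro exI[of _ "(i + 1) div 2"]) (auto simp: bK_def elim!: oddE)
qed

lemma Kc_add: "Kc (a + b) = Kc a + Kc b" by (simp add: Kc_def)
lemma Kc_mult: "Kc (a * b) = Kc a * Kc b" by (simp add: Kc_def)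
lemma Kc_one: "Kc 1 = 1" by (simp add: Kc_def)
lemma Kc_zero: "Kc 0 = 0" by (simp add: Kc_def)

lemma fR_alt: "fR n = xR * Kc (aK n) + yR * Kc (bK n)"
  by (simp add: fR_def mult.commute)

lemma fR_nth: "cf (fR n) i j = (if i = 1 \<and> j = 0 then aK n else if i = 0 \<and> j = 1 then bK n else 0)"
  unfolding fR_alt fps_add_nth xR_mult_nth yR_mult_nth Kc_nth by auto



locale sig =
  fixes \<sigma> :: "'f::field Rring \<Rightarrow> 'f Rring"
  assumes is_sig: "is_sigma \<sigma>"
begin

lemma s_add: "\<sigma> (r + s) = \<sigma> r + \<sigma> s" using is_sig unfolding is_sigma_def by blast
lemma s_mult: "\<sigma> (r * s) = \<sigma> r * \<sigma> s" using is_sig unfolding is_sigma_def by blast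
lemma s_one: "\<sigma> 1 = 1" using is_sig unfolding is_sigma_def by blast
lemma s_Fc: "\<sigma> (Fc c) = Fc c" using is_sig unfolding is_sigma_def by blast
lemma s_x: "\<sigma> xR = xR" using is_sig unfolding is_sigma_def by blast
lemma s_y: "\<sigma> yR = yR" using is_sig unfolding is_sigma_def by blast
lemma s_a: "n \<ge> 1 \<Longrightarrow> \<sigma> (Kc (aK n)) = Kc (aK n) + yR * fR (n + 1)" using is_sig unfolding is_sigma_def by blast
lemma s_b: "n \<ge> 1 \<Longrightarrow> \<sigma> (Kc (bK n)) = Kc (bK n) - xR * fR (n + 1)" using is_sig unfolding is_sigma_def by blast

lemma s_zero: "\<sigma> 0 = 0"
  using s_add[of 0 0] by (metis add.right_neutral add_left_cancel)
lemma s_uminus: "\<sigma> (- r) = - \<sigma> r"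
  using s_add[of r "- r"] s_zero by (metis minus_unique add.right_inverse)
lemma s_diff: "\<sigma> (r - s) = \<sigma> r - \<sigma> s"
  using s_add[of r "- s"] s_uminus by simp

lemma s_fR: "n \<ge> 1 \<Longrightarrow> \<sigma> (fR n) = fR n"
  unfolding fR_def s_add s_mult s_a s_b s_x s_y by (simp add: algebra_simps)

lemma s_of_nat: "\<sigma> (of_nat k) = of_nat k"
  by (induction k) (simp_all add: s_zero s_add s_one)

lemma s_Kc_gen: "\<sigma> (Kc (Fraction_Field.Fract (polconst c) 1)) = Kc (Fraction_Field.Fract (polconst c) 1)"
  using s_Fc[of c] by (simp add: Fc_def)

lemma coefA: "cf (\<sigma> (Kc c)) 0 0 = c"
proof (induction c rule: gen_K)
  case (add a b) then show ?case by (simp add: Kc_add s_add)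
next
  case (mult a b) then show ?case by (simp add: Kc_mult s_mult)
next
  case (const c) then show ?case by (simp add: s_Kc_gen Kc_nth)
next
  case (var i)
  obtain n where n: "n \<ge> 1" and "Fraction_Field.Fract (polvar i) 1 = (aK n :: 'f Kfield) \<or> Fraction_Field.Fract (polvar i) 1 = (bK n :: 'f Kfield)"
    using var_cases by blast
  moreover have "cf (\<sigma> (Kc (aK n))) 0 0 = aK n"
    unfolding s_a[OF n] fps_add_nth yR_mult_nth Kc_nth by simp
  moreover have "cf (\<sigma> (Kc (bK n))) 0 0 = bK n"
    unfolding s_b[OF n] fps_sub_nth xR_mult_nth Kc_nth by simp
  ultimately show ?case by metis
next
  case (inv q)
  have "cf (\<sigma> (Kc q)) 0 0 * cf (\<sigma> (Kc (inverse q))) 0 0 = cf (\<sigma> (Kc (q * inverse q))) 0 0"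
    by (simp add: Kc_mult s_mult)
  also have "\<dots> = 1" using inv by (simp add: Kc_one s_one)
  finally show ?case using inv by (simp add: field_simps)
qed


lemma coefB: "cf (\<sigma> (Kc c)) 1 0 = 0 \<and> cf (\<sigma> (Kc c)) 0 1 = 0"
proof (induction c rule: gen_K)
  case (add a b) then show ?case by (simp add: Kc_add s_add)
next
  case (mult a b) then show ?case by (simp only: Kc_mult s_mult mult_10 mult_01) simp
next
  case (const c) then show ?case by (simp add: s_Kc_gen Kc_nth)
next
  case (var i)
  obtain n where n: "n \<ge> 1" and "Fraction_Field.Fract (polvar i) 1 = (aK n :: 'f Kfield) \<or> Fraction_Field.Fract (polvar i) 1 = (bK n :: 'f Kfield)"
    using var_cases by blast
  moreover have "cf (\<sigma> (Kc (aK n))) 1 0 = 0 \<and> cf (\<sigma> (Kc (aK n))) 0 1 = 0"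
    unfolding s_a[OF n] fps_add_nth yR_mult_nth Kc_nth fR_nth by simp
  moreover have "cf (\<sigma> (Kc (bK n))) 1 0 = 0 \<and> cf (\<sigma> (Kc (bK n))) 0 1 = 0"
    unfolding s_b[OF n] fps_sub_nth xR_mult_nth Kc_nth fR_nth by simp
  ultimately show ?case by metis
next
  case (inv q)
  have "Kc q * Kc (inverse q) = 1" using inv(2) by (simp add: Kc_mult[symmetric] Kc_one)
  then have "\<sigma> (Kc q) * \<sigma> (Kc (inverse q)) = 1" by (metis s_mult s_one)
  then have e1: "cf (\<sigma> (Kc q) * \<sigma> (Kc (inverse q))) 1 0 = 0" and e2: "cf (\<sigma> (Kc q) * \<sigma> (Kc (inverse q))) 0 1 = 0"
    by simp_all
  from e1 have "q * cf (\<sigma> (Kc (inverse q))) 1 0 = 0"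
    unfolding mult_10 using inv(1) by (simp add: coefA)
  moreover from e2 have "q * cf (\<sigma> (Kc (inverse q))) 0 1 = 0"
    unfolding mult_01 using inv(1) by (simp add: coefA)
  ultimately show ?case using inv(2) by simp
qed

definition dl :: "'f Kfield \<Rightarrow> 'f Kfield" where
  "dl c = cf (\<sigma> (Kc c)) 1 1"

lemma dl_add: "dl (a + b) = dl a + dl b"
  by (simp add: dl_def Kc_add s_add)

lemma dl_mult: "dl (a * b) = a * dl b + dl a * b"
  unfolding dl_def Kc_mult s_mult mult_11 using coefA coefB by (simp add: mult.commute)

lemma dl_sum: "dl (sum f A) = sum (\<lambda>i. dl (f i)) A"
proof (induction A rule: infinite_finite_induct)
  case (infinite A) then show ?case by (simp add: dl_def Kc_zero s_zero)
next
  case empty then show ?case by (simp add: dl_def Kc_zero s_zero)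
next
  case (insert x F) then show ?case by (simp add: dl_add)
qed

lemma dl_aK: "n \<ge> 1 \<Longrightarrow> dl (aK n) = aK (n + 1)"
  unfolding dl_def s_a fps_add_nth yR_mult_nth Kc_nth fR_nth by simp

lemma D0: "cf (\<sigma> r) 0 0 = cf r 0 0"
proof -
  obtain u v where r: "r = Kc (cf r 0 0) + xR * u + yR * v" using decomp by blast
  have "\<sigma> r = \<sigma> (Kc (cf r 0 0)) + xR * \<sigma> u + yR * \<sigma> v"
    by (subst r) (simp add: s_add s_mult s_x s_y)
  then have "cf (\<sigma> r) 0 0 = cf (\<sigma> (Kc (cf r 0 0))) 0 0"
    by (simp only: fps_add_nth xR_mult_nth yR_mult_nth) simp
  then show ?thesis using coefA by simp
qed

lemma D1: "cf (\<sigma> r) 1 0 = cf r 1 0 \<and> cf (\<sigma> r) 0 1 = cf r 0 1"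
proof -
  obtain u v where r: "r = Kc (cf r 0 0) + xR * u + yR * v" using decomp by blast
  have s: "\<sigma> r = \<sigma> (Kc (cf r 0 0)) + xR * \<sigma> u + yR * \<sigma> v"
    by (subst r) (simp add: s_add s_mult s_x s_y)
  have "cf (\<sigma> r) 1 0 = cf (\<sigma> u) 0 0"
    unfolding s fps_add_nth xR_mult_nth yR_mult_nth using coefB by simp
  moreover have "cf r 1 0 = cf u 0 0"
    by (subst r) (simp only: fps_add_nth xR_mult_nth yR_mult_nth Kc_nth, simp)
  moreover have "cf (\<sigma> r) 0 1 = cf (\<sigma> v) 0 0"
    unfolding s fps_add_nth xR_mult_nth yR_mult_nth using coefB by simp
  moreover have "cf r 0 1 = cf v 0 0"
    by (subst r) (simp only: fps_add_nth xR_mult_nth yR_mult_nth Kc_nth, simp)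
  ultimately show ?thesis using D0 by simp
qed

lemma D2: "cf (\<sigma> r) 1 1 = dl (cf r 0 0) + cf r 1 1"
proof -
  obtain u v where r: "r = Kc (cf r 0 0) + xR * u + yR * v" using decomp by blast
  have s: "\<sigma> r = \<sigma> (Kc (cf r 0 0)) + xR * \<sigma> u + yR * \<sigma> v"
    by (subst r) (simp add: s_add s_mult s_x s_y)
  have "cf (\<sigma> r) 1 1 = dl (cf r 0 0) + cf (\<sigma> u) 0 1 + cf (\<sigma> v) 1 0"
    unfolding s fps_add_nth xR_mult_nth yR_mult_nth dl_def by simp
  moreover have "cf r 1 1 = cf u 0 1 + cf v 1 0"
    by (subst r) (simp only: fps_add_nth xR_mult_nth yR_mult_nth Kc_nth, simp)
  ultimately show ?thesis using D1 by simp
qed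

end


definition ux :: "'a::zero fps fps \<Rightarrow> 'a fps fps" where "ux r = Abs_fps (\<lambda>i. fps_nth r (i+1))"
definition vy :: "'a::zero fps fps \<Rightarrow> 'a fps fps" where "vy r = fps_const (Abs_fps (\<lambda>j. cf r 0 (j+1)))"

lemma ux_nth: "cf (ux r) i j = cf r (i+1) j" by (simp add: ux_def)
lemma vy_nth: "cf (vy r) i j = (if i = 0 then cf r 0 (j+1) else 0)" by (simp add: vy_def)

lemma decomp': "(r :: 'f::field Rring) = Kc (cf r 0 0) + xR * ux r + yR * vy r"
proof (rule fps_ext, rule fps_ext)
  fix i j
  show "cf r i j = cf (Kc (cf r 0 0) + xR * ux r + yR * vy r) i j"
    unfolding fps_add_nth xR_mult_nth yR_mult_nth Kc_nth ux_nth vy_nth by (cases i; cases j) simp_all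
qed

definition vanish :: "nat \<Rightarrow> 'a::zero fps fps \<Rightarrow> bool" where
  "vanish k r \<longleftrightarrow> (\<forall>i j. i + j < k \<longrightarrow> cf r i j = 0)"

lemma vanish_0[simp]: "vanish 0 r" by (simp add: vanish_def)
lemma vanish_add: "vanish k a \<Longrightarrow> vanish k (b::'a::comm_monoid_add fps fps) \<Longrightarrow> vanish k (a + b)" by (simp add: vanish_def)
lemma vanish_diff: "vanish k a \<Longrightarrow> vanish k (b::'a::ab_group_add fps fps) \<Longrightarrow> vanish k (a - b)" by (simp add: vanish_def)
lemma vanish_uminus: "vanish k (- (a::'a::ab_group_add fps fps)) \<longleftrightarrow> vanish k a" by (simp add: vanish_def)
lemma vanish_mono: "vanish m a \<Longrightarrow> k \<le> m \<Longrightarrow> vanish k a" by (simp add: vanish_def)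

lemma vanish_comb: "vanish k A \<Longrightarrow> vanish k B \<Longrightarrow> vanish (Suc k) (xR * A + yR * (B :: 'f::field Rring))"
  unfolding vanish_def fps_add_nth xR_mult_nth yR_mult_nth by auto

lemma vanish_all: "(\<And>k. vanish k r) \<Longrightarrow> r = 0"
proof (rule fps_ext, rule fps_ext)
  fix i j assume "\<And>k. vanish k r"
  then have "vanish (i + j + 1) r" .
  then show "cf r i j = cf 0 i j" by (simp add: vanish_def)
qed

lemma vanish_Suc_parts: "vanish (Suc k) r \<Longrightarrow> cf r 0 0 = 0 \<and> vanish k (ux r) \<and> vanish k (vy r)"
  unfolding vanish_def ux_nth vy_nth by auto

context sig
begin

lemma V1: "vanish k r \<Longrightarrow> vanish (Suc k) (\<sigma> r - r)"
proof (induction k arbitrary: r)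
  case 0
  then show ?case by (simp add: vanish_def D0)
next
  case (Suc k)
  from vanish_Suc_parts[OF Suc.prems] have r0: "cf r 0 0 = 0" and u: "vanish k (ux r)" and v: "vanish k (vy r)" by auto
  have r: "r = xR * ux r + yR * vy r" using decomp'[of r] r0 by (simp add: Kc_zero)
  have "\<sigma> r - r = xR * (\<sigma> (ux r) - ux r) + yR * (\<sigma> (vy r) - vy r)"
    by (subst (1 2) r) (simp add: s_add s_mult s_x s_y algebra_simps)
  then show ?case using vanish_comb[OF Suc.IH[OF u] Suc.IH[OF v]] by simp
qed

lemma V_pres: "vanish k r \<Longrightarrow> vanish k (\<sigma> r)"
proof -
  assume a: "vanish k r"
  have "\<sigma> r = r + (\<sigma> r - r)" by simp
  then show ?thesis using vanish_add[OF a vanish_mono[OF V1[OF a]]] by simp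
qed

lemma s_inj: "inj \<sigma>"
proof (rule injI)
  fix r s assume e: "\<sigma> r = \<sigma> s"
  define t where "t = r - s"
  have st: "\<sigma> t = 0" using e by (simp add: t_def s_diff)
  have "vanish k t" for k
  proof (induction k)
    case 0 then show ?case by simp
  next
    case (Suc k)
    from V1[OF Suc] st show ?case by (simp add: vanish_uminus)
  qed
  then have "t = 0" by (rule vanish_all)
  then show "r = s" by (simp add: t_def)
qed

lemma s_surj: "surj \<sigma>"
proof -
  have "\<exists>r. \<sigma> r = s" for s
  proof -
    define rr where "rr = rec_nat s (\<lambda>k x. x + (s - \<sigma> x))"
    have rr0: "rr 0 = s" and rrS: "rr (Suc k) = rr k + (s - \<sigma> (rr k))" for k
      by (simp_all add: rr_def)
    have ev: "vanish k (s - \<sigma> (rr k))" for k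
    proof (induction k)
      case 0 then show ?case by simp
    next
      case (Suc k)
      have "s - \<sigma> (rr (Suc k)) = - (\<sigma> (s - \<sigma> (rr k)) - (s - \<sigma> (rr k)))"
        unfolding rrS s_add by (simp add: algebra_simps)
      then show ?case using V1[OF Suc] vanish_uminus by metis
    qed
    have stab: "cf (rr m) i j = cf (rr k) i j" if "k \<le> m" "i + j < k" for i j k m
      using that(1)
    proof (induction m rule: dec_induct)
      case base then show ?case by simp
    next
      case (step m)
      have "cf (s - \<sigma> (rr m)) i j = 0" using ev[of m] that(2) step(1) unfolding vanish_def by auto
      then show ?case using step by (simp add: rrS)
    qed
    define r where "r = Abs_fps (\<lambda>i. Abs_fps (\<lambda>j. cf (rr (i+j+1)) i j))"
    have rk: "vanish k (r - rr k)" for k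
      unfolding vanish_def r_def using stab[of "Suc (i+j)" k i j for i j] by simp
    have "vanish k (\<sigma> r - s)" for k
    proof -
      have "\<sigma> r - s = \<sigma> (r - rr k) - (s - \<sigma> (rr k))" by (simp add: s_diff)
      then show ?thesis using vanish_diff[OF V_pres[OF rk] ev] by metis
    qed
    then have "\<sigma> r - s = 0" by (rule vanish_all)
    then show ?thesis by auto
  qed
  then show ?thesis by (metis surjI)
qed

lemma s_bij: "bij \<sigma>" using s_inj s_surj by (simp add: bij_def)

end



lemma Kc_mult_nth: "cf (Kc c * A) i j = c * cf A i j"
  by (simp add: Kc_def)

lemma of_nat_R: "(of_nat k :: 'f::field Rring) = Kc (of_nat k)"
  by (simp add: Kc_def fps_of_nat)

lemma aK_nz: "aK n \<noteq> (0 :: 'f::field Kfield)"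
proof -
  have "polvar (2 * n - 2) \<noteq> (0 :: 'f Pol)"
    unfolding polvar_def by (metis lookup_single_eq lookup_zero one_neq_zero)
  then show ?thesis by (simp add: aK_def Zero_fract_def eq_fract)
qed

lemma uniq_hom:
  fixes \<tau> :: "'f::field Rring \<Rightarrow> 'f Rring"
  assumes add: "\<And>r s. \<tau> (r + s) = \<tau> r + \<tau> s"
    and mult: "\<And>r s. \<tau> (r * s) = \<tau> r * \<tau> s"
    and one: "\<tau> 1 = 1"
    and Fc: "\<And>c. \<tau> (Fc c) = Fc c"
    and a: "\<And>n. n \<ge> 1 \<Longrightarrow> \<tau> (Kc (aK n)) = Kc (aK n)"
    and b: "\<And>n. n \<ge> 1 \<Longrightarrow> \<tau> (Kc (bK n)) = Kc (bK n)"
    and x: "\<tau> xR = xR" and y: "\<tau> yR = yR"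
  shows "\<tau> = id"
proof -
  have Kfix: "\<tau> (Kc c) = Kc c" for c
  proof (induction c rule: gen_K)
    case (add a b) then show ?case by (simp add: Kc_add assms(1))
  next
    case (mult a b) then show ?case by (simp add: Kc_mult assms(2))
  next
    case (const c) then show ?case using Fc[of c] by (simp add: Fc_def)
  next
    case (var i)
    obtain n where n: "n \<ge> 1" and "Fraction_Field.Fract (polvar i) 1 = (aK n :: 'f Kfield) \<or> Fraction_Field.Fract (polvar i) 1 = (bK n :: 'f Kfield)"
      using var_cases by blast
    then show ?case using a[OF n] b[OF n] by metis
  next
    case (inv q)
    have e: "Kc q * Kc (inverse q) = 1" using inv(2) by (simp add: Kc_mult[symmetric] Kc_one)
    then have "Kc q * \<tau> (Kc (inverse q)) = 1" using inv(1) by (metis mult one)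
    then have "Kc (inverse q) * (Kc q * \<tau> (Kc (inverse q))) = Kc (inverse q)" by simp
    then show ?case using e by (simp add: mult.assoc[symmetric] mult.commute)
  qed
  have "vanish k (\<tau> r - r)" for k r
  proof (induction k arbitrary: r)
    case 0 then show ?case by simp
  next
    case (Suc k)
    have t0: "\<tau> 0 = 0" using add[of 0 0] by (metis add.right_neutral add_left_cancel)
    have tm: "\<tau> (- r) = - \<tau> r" for r using add[of r "- r"] t0 by (metis minus_unique add.right_inverse)
    have td: "\<tau> (r - s) = \<tau> r - \<tau> s" for r s using add[of r "- s"] tm by simp
    have "\<tau> r - r = xR * (\<tau> (ux r) - ux r) + yR * (\<tau> (vy r) - vy r)"
      by (subst (1 2) decomp') (simp add: add mult x y Kfix algebra_simps)
    then show ?case using vanish_comb[OF Suc.IH Suc.IH] by simp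
  qed
  then have "\<tau> r - r = 0" for r by (rule vanish_all)
  then show ?thesis by (auto simp: fun_eq_iff)
qed

context sig
begin

lemma pow_hom: "(\<sigma> ^^ k) (r + s) = (\<sigma> ^^ k) r + (\<sigma> ^^ k) s \<and> (\<sigma> ^^ k) (r * s) = (\<sigma> ^^ k) r * (\<sigma> ^^ k) s"
  by (induction k arbitrary: r s) (simp_all add: s_add s_mult)

lemma pow_fix: "\<sigma> z = z \<Longrightarrow> (\<sigma> ^^ k) z = z"
  by (induction k) simp_all

lemma pow_a: "n \<ge> 1 \<Longrightarrow> (\<sigma> ^^ k) (Kc (aK n)) = Kc (aK n) + of_nat k * (yR * fR (n + 1))"
proof (induction k)
  case 0 then show ?case by simp
next
  case (Suc k)
  then show ?case
    by (simp add: s_add s_mult s_a s_of_nat s_y s_fR algebra_simps)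
qed

lemma pow_b: "n \<ge> 1 \<Longrightarrow> (\<sigma> ^^ k) (Kc (bK n)) = Kc (bK n) - of_nat k * (xR * fR (n + 1))"
proof (induction k)
  case 0 then show ?case by simp
next
  case (Suc k)
  have "(\<sigma> ^^ Suc k) (Kc (bK n)) = \<sigma> ((\<sigma> ^^ k) (Kc (bK n)))" by simp
  also have "\<dots> = \<sigma> (Kc (bK n) - of_nat k * (xR * fR (n + 1)))" using Suc by simp
  also have "\<dots> = (Kc (bK n) - xR * fR (n + 1)) - of_nat k * (xR * fR (n + 1))"
    using Suc.prems s_fR[of "n+1"] by (simp only: s_diff s_mult s_b s_of_nat s_x)
  finally show ?case by (simp add: algebra_simps)
qed

lemma pow_id_char: "(\<sigma> ^^ k = id) \<longleftrightarrow> CHAR('f Kfield) dvd k"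
proof
  assume e: "\<sigma> ^^ k = id"
  have "Kc (aK 1) + of_nat k * (yR * fR (1 + 1)) = (Kc (aK 1) :: 'f Rring)"
    using pow_a[of 1 k] e by simp
  then have "of_nat k * (yR * fR 2) = (0 :: 'f Rring)"
    by (metis add_cancel_right_right one_add_one)
  then have "cf (Kc (of_nat k) * (yR * fR 2)) 1 1 = (0 :: 'f Kfield)" by (metis of_nat_R fps_zero_nth)
  then have "of_nat k * aK 2 = (0 :: 'f Kfield)"
    unfolding Kc_mult_nth yR_mult_nth fR_nth by simp
  then have "of_nat k = (0 :: 'f Kfield)" using aK_nz[where 'f='f, of 2] by simp
  then show "CHAR('f Kfield) dvd k" by (simp add: of_nat_eq_0_iff_char_dvd)
next
  assume d: "CHAR('f Kfield) dvd k"
  then have "(of_nat k :: 'f Kfield) = 0" by (simp add: of_nat_eq_0_iff_char_dvd)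
  then have z: "(of_nat k :: 'f Rring) = 0"
    by (simp add: of_nat_R Kc_zero)
  show "\<sigma> ^^ k = id"
  proof (rule uniq_hom)
    show "(\<sigma> ^^ k) (r + s) = (\<sigma> ^^ k) r + (\<sigma> ^^ k) s" for r s using pow_hom by blast
    show "(\<sigma> ^^ k) (r * s) = (\<sigma> ^^ k) r * (\<sigma> ^^ k) s" for r s using pow_hom by blast
    show "(\<sigma> ^^ k) 1 = 1" by (rule pow_fix[OF s_one])
    show "(\<sigma> ^^ k) (Fc c) = Fc c" for c by (rule pow_fix[OF s_Fc])
    show "(\<sigma> ^^ k) xR = xR" by (rule pow_fix[OF s_x])
    show "(\<sigma> ^^ k) yR = yR" by (rule pow_fix[OF s_y])
    show "(\<sigma> ^^ k) (Kc (aK n)) = Kc (aK n)" if "n \<ge> 1" for n using pow_a[OF that] z by simp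
    show "(\<sigma> ^^ k) (Kc (bK n)) = Kc (bK n)" if "n \<ge> 1" for n using pow_b[OF that] z by simp
  qed
qed

end



lemma lookup_mult_monom:
  fixes p :: "(nat \<Rightarrow>\<^sub>0 nat) \<Rightarrow>\<^sub>0 'a::comm_semiring_1"
  shows "Poly_Mapping.lookup (p * Poly_Mapping.single m 1) (l + m) = Poly_Mapping.lookup p l
      \<and> ((\<forall>l'. k \<noteq> l' + m) \<longrightarrow> Poly_Mapping.lookup (p * Poly_Mapping.single m 1) k = 0)"
proof (induction p rule: update_induct)
  case const then show ?case by (simp add: lookup_zero)
next
  case (update f a b)
  have e: "Poly_Mapping.update a b f * Poly_Mapping.single m 1 = f * Poly_Mapping.single m 1 + Poly_Mapping.single (a + m) b"
    using update(1) by (simp add: update_as_add distrib_right mult_single)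
  show ?case unfolding e lookup_add using update(3)
    by (auto simp: lookup_single update_as_add[OF update(1)] lookup_add when_def)
qed

lemma Fract_sum: "Fraction_Field.Fract (sum g A) 1 = (\<Sum>i\<in>A. Fraction_Field.Fract (g i) (1::'a::idom))"
proof (induction A rule: infinite_finite_induct)
  case (infinite A) then show ?case by (simp add: Zero_fract_def)
next
  case empty then show ?case by (simp add: Zero_fract_def)
next
  case (insert x F)
  have "Fraction_Field.Fract (g x + sum g F) 1 = Fraction_Field.Fract (g x) 1 + Fraction_Field.Fract (sum g F) (1::'a)" by simp
  then show ?case using insert by simp
qed

lemma common_denom: "\<exists>p q. q \<noteq> (0::'a::idom) \<and> (\<forall>i<(M::nat). \<gamma> i = Fraction_Field.Fract (p i) q)"
proof (induction M)
  case 0 then show ?case by (intro exI[of _ "\<lambda>_. 0"] exI[of _ 1]) simp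
next
  case (Suc M)
  then obtain p q where q: "q \<noteq> 0" and pq: "\<forall>i<M. \<gamma> i = Fraction_Field.Fract (p i) q" by blast
  obtain p' q' where q': "q' \<noteq> 0" and e: "\<gamma> M = Fraction_Field.Fract p' q'" by (cases "\<gamma> M") blast
  show ?case
  proof (intro exI conjI allI impI)
    show "q * q' \<noteq> 0" using q q' by simp
    fix i assume "i < Suc M"
    then show "\<gamma> i = Fraction_Field.Fract ((\<lambda>i. if i < M then p i * q' else p' * q) i) (q * q')"
      using pq e q q' by (auto simp: less_Suc_eq eq_fract mult.commute mult.left_commute)
  qed
qed

lemma no_relation:
  fixes \<gamma> :: "nat \<Rightarrow> 'f::field Kfield"
  shows "\<not> (\<forall>t. aK (M + 1 + t) = (\<Sum>i<M. \<gamma> i * aK (i + 1 + t)))"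
proof
  assume all: "\<forall>t. aK (M + 1 + t) = (\<Sum>i<M. \<gamma> i * aK (i + 1 + t))"
  obtain p q where q: "q \<noteq> (0 :: 'f Pol)" and pq: "\<forall>i<M. \<gamma> i = Fraction_Field.Fract (p i) q"
    using common_denom by blast
  define V where "V = (\<Union>m\<in>Poly_Mapping.keys q. Poly_Mapping.keys m)"
  have "finite V" unfolding V_def by simp
  then obtain B where B: "\<forall>v\<in>V. v < B"
    by (metis finite_nat_set_iff_bounded)
  define t where "t = B"
  define v where "v = 2 * M + 2 * t"
  define w where "w i = 2 * i + 2 * t" for i
  have aKv: "aK (M + 1 + t) = (Fraction_Field.Fract (polvar v) 1 :: 'f Kfield)"
    by (simp add: aK_def v_def)
  have aKw: "aK (Suc (i + t)) = (Fraction_Field.Fract (polvar (w i)) 1 :: 'f Kfield)" for i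
    by (simp add: aK_def w_def)
  have "(\<Sum>i<M. \<gamma> i * aK (i + 1 + t)) = (\<Sum>i<M. Fraction_Field.Fract (p i * polvar (w i)) 1 * Fraction_Field.Fract 1 q)"
    by (rule sum.cong) (simp_all add: pq aKw)
  also have "\<dots> = Fraction_Field.Fract (\<Sum>i<M. p i * polvar (w i)) 1 * Fraction_Field.Fract 1 q"
    by (simp add: Fract_sum sum_distrib_right)
  also have "\<dots> = Fraction_Field.Fract (\<Sum>i<M. p i * polvar (w i)) q" by simp
  finally have "Fraction_Field.Fract (polvar v) 1 = Fraction_Field.Fract (\<Sum>i<M. p i * polvar (w i)) q"
    using all aKv by simp
  then have eq: "q * polvar v = (\<Sum>i<M. p i * polvar (w i))"
    using q by (simp add: eq_fract mult.commute)
  obtain m0 where m0: "m0 \<in> Poly_Mapping.keys q" using q by (metis all_not_in_conv keys_eq_empty)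
  define n where "n = m0 + Poly_Mapping.single v 1"
  have "Poly_Mapping.lookup (q * polvar v) n = Poly_Mapping.lookup q m0"
    unfolding n_def polvar_def using lookup_mult_monom by blast
  also have "\<dots> \<noteq> 0" using m0 by (simp add: in_keys_iff)
  finally have lhs: "Poly_Mapping.lookup (q * polvar v) n \<noteq> 0" .
  have "Poly_Mapping.lookup (p i * polvar (w i)) n = 0" if "i < M" for i
  proof -
    have "\<forall>l'. n \<noteq> l' + Poly_Mapping.single (w i) 1"
    proof
      fix l'
      show "n \<noteq> l' + Poly_Mapping.single (w i) 1"
      proof
        assume h: "n = l' + Poly_Mapping.single (w i) 1"
        have wv: "w i \<noteq> v" using that by (simp add: w_def v_def)
        have "Poly_Mapping.lookup n (w i) = Poly_Mapping.lookup m0 (w i)" using wv by (simp add: n_def lookup_add lookup_single)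
        moreover have "Poly_Mapping.lookup n (w i) \<ge> 1" using h by (simp add: lookup_add lookup_single)
        ultimately have "w i \<in> Poly_Mapping.keys m0" by (simp add: in_keys_iff)
        then have "w i \<in> V" using m0 by (auto simp: V_def)
        then have "w i < B" using B by blast
        then show False by (simp add: w_def t_def)
      qed
    qed
    then show ?thesis unfolding polvar_def using lookup_mult_monom by blast
  qed
  then have "Poly_Mapping.lookup (\<Sum>i<M. p i * polvar (w i)) n = 0" by (simp add: lookup_sum)
  then show False using lhs eq by simp
qed




lemma funpow_fix: "f z = z \<Longrightarrow> (f ^^ n) z = z"
  by (induction n) simp_all

context sig
begin

lemma inv_fix: "\<sigma> z = z \<Longrightarrow> inv_into UNIV \<sigma> z = z"
  using s_inj by (metis inv_f_f)

lemma fR_inv: "n \<ge> 1 \<Longrightarrow> fR n \<in> invariant_set \<sigma>"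
proof -
  assume n: "n \<ge> 1"
  have a: "(\<sigma> ^^ m) (fR n) = fR n" for m by (rule funpow_fix) (rule s_fR[OF n])
  have b: "(inv_into UNIV \<sigma> ^^ m) (fR n) = fR n" for m by (rule funpow_fix) (rule inv_fix[OF s_fR[OF n]])
  show ?thesis unfolding invariant_set_def using a b by blast
qed

lemma inv_sig: "r \<in> invariant_set \<sigma> \<Longrightarrow> \<sigma> r = r"
proof -
  assume "r \<in> invariant_set \<sigma>"
  then have "(\<sigma> ^^ Suc 0) r = r" unfolding invariant_set_def by blast
  then show ?thesis by simp
qed

lemma iterate_rel:
  assumes rel: "aK (M + 1) = (\<Sum>i<M. \<gamma> i * aK (i + 1))"
    and dz: "\<And>i. i < M \<Longrightarrow> dl (\<gamma> i) = 0"
  shows "aK (M + 1 + t) = (\<Sum>i<M. \<gamma> i * aK (i + 1 + t))"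
proof (induction t)
  case 0 then show ?case using rel by simp
next
  case (Suc t)
  have "aK (M + 1 + Suc t) = dl (aK (M + 1 + t))" by (simp add: dl_aK)
  also have "\<dots> = dl (\<Sum>i<M. \<gamma> i * aK (i + 1 + t))" using Suc by simp
  also have "\<dots> = (\<Sum>i<M. \<gamma> i * aK (i + 1 + Suc t))"
    unfolding dl_sum by (rule sum.cong) (simp_all add: dl_mult dz dl_aK)
  finally show ?case .
qed

lemma not_noeth: "\<not> noetherian_ring (subring_struct (invariant_set \<sigma>))"
proof
  define I where "I = invariant_set \<sigma>"
  assume "noetherian_ring (subring_struct (invariant_set \<sigma>))"
  then interpret RS: noetherian_ring "subring_struct I" by (simp add: I_def)
  have carr: "carrier (subring_struct I) = I" by (simp add: subring_struct_def)
  have addI: "a \<in> I \<Longrightarrow> b \<in> I \<Longrightarrow> a + b \<in> I" for a b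
    using RS.a_closed by (simp add: subring_struct_def)
  have mulI: "a \<in> I \<Longrightarrow> b \<in> I \<Longrightarrow> a * b \<in> I" for a b
    using RS.m_closed by (simp add: subring_struct_def)
  have zeroI: "0 \<in> I" using RS.zero_closed by (simp add: subring_struct_def)
  have oneI: "1 \<in> I" using RS.one_closed by (simp add: subring_struct_def)
  have neg_eq: "a \<in> I \<Longrightarrow> \<ominus>\<^bsub>subring_struct I\<^esub> a = - a" for a
  proof -
    assume a: "a \<in> I"
    have "\<ominus>\<^bsub>subring_struct I\<^esub> a + a = 0" using RS.l_neg a carr by (simp add: subring_struct_def)
    then show "\<ominus>\<^bsub>subring_struct I\<^esub> a = - a" by (simp add: eq_neg_iff_add_eq_0)
  qed
  have negI: "a \<in> I \<Longrightarrow> - a \<in> I" for a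
    using RS.a_inv_closed carr neg_eq by force
  have fI: "fR (Suc i) \<in> I" for i using fR_inv by (simp add: I_def)
  define J where "J N = {r. \<exists>c. (\<forall>i<N. c i \<in> I) \<and> r = (\<Sum>i<N. c i * fR (i + 1))}" for N
  have memJ: "(\<forall>i<N. c i \<in> I) \<Longrightarrow> r = (\<Sum>i<N. c i * fR (i + 1)) \<Longrightarrow> r \<in> J N" for N c r
    unfolding J_def by blast
  have sumI: "(\<forall>i<N. c i \<in> I) \<Longrightarrow> (\<Sum>i<N. c i * fR (i + 1)) \<in> I" for N c
    by (induction N) (auto intro!: addI mulI simp: zeroI fI)
  have JI: "J N \<subseteq> I" for N using sumI by (auto simp: J_def)
  have ideal: "ideal (J N) (subring_struct I)" for N
  proof (rule idealI)
    show "ring (subring_struct I)" by (rule RS.ring_axioms)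
    show "subgroup (J N) (add_monoid (subring_struct I))"
    proof (rule RS.add.subgroupI)
      show "J N \<subseteq> carrier (subring_struct I)" using JI carr by simp
      have "0 \<in> J N" by (rule memJ[of N "\<lambda>_. 0"]) (simp_all add: zeroI)
      then show "J N \<noteq> {}" by blast
    next
      fix a assume aJ: "a \<in> J N"
      then obtain c where c: "\<forall>i<N. c i \<in> I" and a: "a = (\<Sum>i<N. c i * fR (i + 1))" unfolding J_def by blast
      have n1: "\<ominus>\<^bsub>subring_struct I\<^esub> a = - a" using neg_eq JI aJ by blast
      have n2: "- a = (\<Sum>i<N. (\<lambda>i. - c i) i * fR (i + 1))" unfolding a by (simp add: sum_negf)
      have "\<forall>i<N. (\<lambda>i. - c i) i \<in> I" using c negI by blast
      from memJ[OF this n2] n1 show "\<ominus>\<^bsub>subring_struct I\<^esub> a \<in> J N" by simp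
    next
      fix a b assume "a \<in> J N" "b \<in> J N"
      then obtain c d where c: "\<forall>i<N. c i \<in> I" and a: "a = (\<Sum>i<N. c i * fR (i + 1))"
        and d: "\<forall>i<N. d i \<in> I" and b: "b = (\<Sum>i<N. d i * fR (i + 1))" unfolding J_def by blast
      have e: "a + b = (\<Sum>i<N. (\<lambda>i. c i + d i) i * fR (i + 1))" unfolding a b by (simp add: distrib_right sum.distrib)
      have "\<forall>i<N. (\<lambda>i. c i + d i) i \<in> I" using c d addI by blast
      from memJ[OF this e] show "a \<oplus>\<^bsub>subring_struct I\<^esub> b \<in> J N" by (simp add: subring_struct_def)
    qed
  next
    fix a x assume aJ: "a \<in> J N" and xc: "x \<in> carrier (subring_struct I)"
    from aJ obtain c where c: "\<forall>i<N. c i \<in> I" and a: "a = (\<Sum>i<N. c i * fR (i + 1))"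
      unfolding J_def by blast
    have x: "x \<in> I" using xc carr by simp
    have xc: "\<forall>i<N. (\<lambda>i. x * c i) i \<in> I" using c x mulI by blast
    have e1: "x * a = (\<Sum>i<N. (\<lambda>i. x * c i) i * fR (i + 1))" unfolding a by (simp add: sum_distrib_left mult.assoc)
    from memJ[OF xc e1] show "x \<otimes>\<^bsub>subring_struct I\<^esub> a \<in> J N" by (simp add: subring_struct_def)
    have e2: "a * x = (\<Sum>i<N. (\<lambda>i. x * c i) i * fR (i + 1))" using e1 by (simp add: mult.commute)
    from memJ[OF xc e2] show "a \<otimes>\<^bsub>subring_struct I\<^esub> x \<in> J N" by (simp add: subring_struct_def)
  qed
  have Jsuc: "J N \<subseteq> J (Suc N)" for N
  proof
    fix r assume "r \<in> J N"
    then obtain c where c: "\<forall>i<N. c i \<in> I" and r: "r = (\<Sum>i<N. c i * fR (i + 1))" by (auto simp: J_def)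
    have "r = (\<Sum>i<Suc N. (c(N := 0)) i * fR (i + 1))" by (simp add: r)
    moreover have "\<forall>i<Suc N. (c(N := 0)) i \<in> I" using c zeroI by (simp add: less_Suc_eq)
    ultimately show "r \<in> J (Suc N)" using memJ by blast
  qed
  have Jmono: "N \<le> N' \<Longrightarrow> J N \<subseteq> J N'" for N N'
    by (induction N' rule: dec_induct) (use Jsuc in blast)+
  have "\<Union>(range J) \<in> range J"
  proof (rule RS.ideal_chain_is_trivial)
    show "range J \<noteq> {}" by simp
    show "subset.chain {I'. ideal I' (subring_struct I)} (range J)"
      unfolding pred_on.chain_def
    proof (intro conjI ballI)
      show "range J \<subseteq> {I'. ideal I' (subring_struct I)}" using ideal by blast
      fix X Y assume "X \<in> range J" "Y \<in> range J"
      then obtain n m where X: "X = J n" and Y: "Y = J m" by blast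
      show "subset.Peq X Y \<or> subset.Peq Y X"
      proof (cases "n \<le> m")
        case True then have "X \<subseteq> Y" using Jmono X Y by blast
        then show ?thesis by (metis psubset_eq sup2I1 sup2I2)
      next
        case False then have "Y \<subseteq> X" using Jmono X Y by simp
        then show ?thesis by (metis psubset_eq sup2I1 sup2I2)
      qed
    qed
  qed
  then obtain M where M: "\<Union>(range J) = J M" by blast
  have "fR (M + 1) \<in> J (Suc M)"
  proof -
    define g :: "nat \<Rightarrow> 'f Rring" where "g i = (if i = M then 1 else 0)" for i
    have "(\<Sum>i<Suc M. g i * fR (i + 1)) = (\<Sum>i<M. g i * fR (i + 1)) + g M * fR (M + 1)"
      by (rule sum.lessThan_Suc)
    moreover have "(\<Sum>i<M. g i * fR (i + 1)) = 0" by (rule sum.neutral) (simp add: g_def)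
    ultimately have "fR (M + 1) = (\<Sum>i<Suc M. g i * fR (i + 1))" by (simp add: g_def)
    moreover have "\<forall>i<Suc M. g i \<in> I" using zeroI oneI by (simp add: g_def)
    ultimately show ?thesis using memJ by blast
  qed
  then have "fR (M + 1) \<in> J M" using M by blast
  then obtain c where c: "\<forall>i<M. c i \<in> I" and f: "fR (M + 1) = (\<Sum>i<M. c i * fR (i + 1))" unfolding J_def by blast
  define \<gamma> where "\<gamma> i = cf (c i) 0 0" for i
  have "aK (M + 1) = cf (fR (M + 1)) 1 0" by (simp add: fR_nth)
  also have "\<dots> = (\<Sum>i<M. cf (c i * fR (i + 1)) 1 0)" unfolding f fps_sum_nth by (rule refl)
  also have "\<dots> = (\<Sum>i<M. \<gamma> i * aK (i + 1))" unfolding mult_10 fR_nth \<gamma>_def by simp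
  finally have rel: "aK (M + 1) = (\<Sum>i<M. \<gamma> i * aK (i + 1))" .
  have dz: "dl (\<gamma> i) = 0" if "i < M" for i
  proof -
    have "\<sigma> (c i) = c i" using c that inv_sig by (simp add: I_def)
    then show ?thesis using D2[of "c i"] by (simp add: \<gamma>_def)
  qed
  have "\<forall>t. aK (M + 1 + t) = (\<Sum>i<M. \<gamma> i * aK (i + 1 + t))" using iterate_rel[OF rel dz] by blast
  then show False using no_relation[of M \<gamma>] by blast
qed

end

theorem mainTheorem1:
  fixes \<sigma> :: "'f::field Rring \<Rightarrow> 'f Rring"
  assumes "is_sigma \<sigma>"
  shows "bij \<sigma>
    \<and> (CHAR('f Kfield) > 0 \<longrightarrow>
         (\<sigma> ^^ CHAR('f Kfield) = id \<and> (\<forall>k. 0 < k \<and> k < CHAR('f Kfield) \<longrightarrow> \<sigma> ^^ k \<noteq> id)))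
    \<and> (CHAR('f Kfield) = 0 \<longrightarrow> (\<forall>k::nat. k > 0 \<longrightarrow> \<sigma> ^^ k \<noteq> id))
    \<and> \<not> noetherian_ring (subring_struct (invariant_set \<sigma>))"
proof -
  interpret sig \<sigma> using assms by unfold_locales
  have A: "CHAR('f Kfield) > 0 \<longrightarrow>
         (\<sigma> ^^ CHAR('f Kfield) = id \<and> (\<forall>k. 0 < k \<and> k < CHAR('f Kfield) \<longrightarrow> \<sigma> ^^ k \<noteq> id))"
    using pow_id_char by (auto dest: nat_dvd_not_less)
  have B: "CHAR('f Kfield) = 0 \<longrightarrow> (\<forall>k::nat. k > 0 \<longrightarrow> \<sigma> ^^ k \<noteq> id)"
    using pow_id_char by auto
  show ?thesis using s_bij A B not_noeth by blast
qed

end
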